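(* Let $f:\mathbb{R}^d\to\mathbb{R}$ be twice differentiable with $L$-Lipschitz Hessian. Let $x,g\in\mathbb{R}^d$, $H\in\mathbb{R}^{d\times d}$ symmetric, $M\ge L$, let $x^+$ be a global minimizer of $y\mapsto\Omega_{M,g,H}(y,x)$ and $r:=\|x^+-x\|$. Then $$ \frac{\bigl(-\lambda_{\min}(\nabla^2 f(x^+))\bigr)^3}{M^2}\;\le\;14Mr^3+\frac{4}{M^2}\|\nabla^2 f(x)-H\|^3 . $$
   Context: $\|\cdot\|$ is the Euclidean norm on vectors and the spectral norm on symmetric matrices; $\lambda_{\min}$ denotes the smallest eigenvalue. The Hessian of $f$ is $L$-Lipschitz means $\|\nabla^2 f(x)-\nabla^2 f(y)\|\le L\|x-y\|$ for all $x,y$. For $M>0$, $g\in\mathbb{R}^d$ and symmetric $H$, $\Omega_{M,g,H}(y,x):=\langle g,y-x\rangle+\frac12\langle H(y-x),y-x\rangle+\frac{M}{6}\|y-x\|^3$. *)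

theory Defs
  imports "HOL-Analysis.Analysis"
begin

definition spec_norm :: "real^'n^'n \<Rightarrow> real" where
  "spec_norm A = onorm (\<lambda>v. A *v v)"

definition eigenvalues :: "real^'n^'n \<Rightarrow> real set" where
  "eigenvalues A = {lam. \<exists>v. v \<noteq> 0 \<and> A *v v = lam *\<^sub>R v}"

definition lambda_min :: "real^'n^'n \<Rightarrow> real" where
  "lambda_min A = Min (eigenvalues A)"

definition twice_diff_with :: "(real^'n \<Rightarrow> real) \<Rightarrow> (real^'n \<Rightarrow> real^'n) \<Rightarrow> (real^'n \<Rightarrow> real^'n^'n) \<Rightarrow> bool" where
  "twice_diff_with f Df Hf \<longleftrightarrow>
     (\<forall>x. (f has_derivative (\<lambda>h. Df x \<bullet> h)) (at x)) \<and>
     (\<forall>x. (Df has_derivative (\<lambda>h. Hf x *v h)) (at x))"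

definition hessian_lipschitz :: "(real^'n \<Rightarrow> real^'n^'n) \<Rightarrow> real \<Rightarrow> bool" where
  "hessian_lipschitz Hf L \<longleftrightarrow> (\<forall>x y. spec_norm (Hf x - Hf y) \<le> L * norm (x - y))"

definition Omega :: "real \<Rightarrow> real^'n \<Rightarrow> real^'n^'n \<Rightarrow> real^'n \<Rightarrow> real^'n \<Rightarrow> real" where
  "Omega M g H y x = g \<bullet> (y - x) + (1/2) * ((H *v (y - x)) \<bullet> (y - x)) + (M / 6) * norm (y - x) ^ 3"

end

theory Submission
  imports Defs
begin


lemma line_deriv:
  assumes "\<forall>y. (f has_derivative (\<lambda>h. Df y \<bullet> h)) (at y)"
  shows "((\<lambda>s. f (a + s *\<^sub>R u)) has_real_derivative (Df (a + s *\<^sub>R u) \<bullet> u)) (at s)"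
proof -
  have d1: "((\<lambda>s. a + s *\<^sub>R u) has_derivative (\<lambda>h. h *\<^sub>R u)) (at s)"
    by (auto intro!: derivative_eq_intros)
  have "((\<lambda>s. f (a + s *\<^sub>R u)) has_derivative (\<lambda>h. Df (a + s *\<^sub>R u) \<bullet> (h *\<^sub>R u))) (at s)"
    using has_derivative_compose[OF d1 assms[rule_format, of "a + s *\<^sub>R u"]] by (simp add: o_def)
  then show ?thesis unfolding has_field_derivative_def
    by (rule has_derivative_eq_rhs) (auto simp: fun_eq_iff)
qed

lemma mvt_part:
  assumes tw: "twice_diff_with f Df Hf" and t: "0 < t" and e: "0 \<le> e"
    and R: "\<forall>y. norm (y - x) < d \<longrightarrow> norm (Df y - Df x - Hf x *v (y - x)) \<le> e * norm (y - x)"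
    and td: "t * (norm u + norm v) < d"
  shows "\<bar>f (x + t *\<^sub>R u + t *\<^sub>R v) - f (x + t *\<^sub>R u) - f (x + t *\<^sub>R v) + f x - t^2 * ((Hf x *v v) \<bullet> u)\<bar>
           \<le> 2 * e * t^2 * (norm u + norm v) * norm u"
proof -
  let ?A = "Hf x"
  have fd: "\<forall>y. (f has_derivative (\<lambda>h. Df y \<bullet> h)) (at y)" using tw unfolding twice_diff_with_def by blast
  define phi where "phi s = f ((x + t *\<^sub>R v) + s *\<^sub>R u) - f (x + s *\<^sub>R u) - s * (t * ((?A *v v) \<bullet> u))" for s
  define phi' where "phi' s = Df ((x + t *\<^sub>R v) + s *\<^sub>R u) \<bullet> u - Df (x + s *\<^sub>R u) \<bullet> u - t * ((?A *v v) \<bullet> u)" for s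
  have D: "(phi has_real_derivative phi' s) (at s)" for s
    unfolding phi_def phi'_def
    by (auto intro!: derivative_eq_intros line_deriv[OF fd])
  obtain z where z: "0 < z" "z < t" "phi t - phi 0 = (t - 0) * phi' z"
    using MVT2[OF t, of phi phi'] D by blast
  define y1 where "y1 = x + t *\<^sub>R v + z *\<^sub>R u"
  define y2 where "y2 = x + z *\<^sub>R u"
  have n1: "norm (y1 - x) \<le> t * (norm u + norm v)"
  proof -
    have "norm (y1 - x) = norm (z *\<^sub>R u + t *\<^sub>R v)" unfolding y1_def by (simp add: algebra_simps)
    also have "\<dots> \<le> z * norm u + t * norm v" using norm_triangle_ineq[of "z *\<^sub>R u" "t *\<^sub>R v"] z t by simp
    also have "\<dots> \<le> t * (norm u + norm v)" using z by (simp add: algebra_simps mult_right_mono)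
    finally show ?thesis .
  qed
  have n2: "norm (y2 - x) \<le> t * (norm u + norm v)"
  proof -
    have "norm (y2 - x) = z * norm u" unfolding y2_def using z by simp
    also have "\<dots> \<le> t * (norm u + norm v)" using z by (simp add: algebra_simps mult_right_mono add_increasing2)
    finally show ?thesis .
  qed
  have r1: "norm (Df y1 - Df x - ?A *v (y1 - x)) \<le> e * (t * (norm u + norm v))"
    using R n1 td e by (meson le_less_trans mult_left_mono order_trans)
  have r2: "norm (Df y2 - Df x - ?A *v (y2 - x)) \<le> e * (t * (norm u + norm v))"
    using R n2 td e by (meson le_less_trans mult_left_mono order_trans)
  have eq: "phi' z = ((Df y1 - Df x - ?A *v (y1 - x)) - (Df y2 - Df x - ?A *v (y2 - x))) \<bullet> u"
    unfolding phi'_def y1_def y2_def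
    by (simp add: matrix_vector_right_distrib matrix_vector_mult_diff_distrib inner_diff_left inner_add_left
        matrix_vector_mult_scaleR algebra_simps)
  have "\<bar>phi' z\<bar> \<le> norm ((Df y1 - Df x - ?A *v (y1 - x)) - (Df y2 - Df x - ?A *v (y2 - x))) * norm u"
    unfolding eq by (rule Cauchy_Schwarz_ineq2)
  also have "\<dots> \<le> (e * (t * (norm u + norm v)) + e * (t * (norm u + norm v))) * norm u"
    by (intro mult_right_mono order_trans[OF norm_triangle_ineq4] add_mono r1 r2) auto
  finally have b: "\<bar>phi' z\<bar> \<le> 2 * e * t * (norm u + norm v) * norm u" by simp
  have "phi t - phi 0 = f (x + t *\<^sub>R u + t *\<^sub>R v) - f (x + t *\<^sub>R u) - f (x + t *\<^sub>R v) + f x - t^2 * ((Hf x *v v) \<bullet> u)"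
    unfolding phi_def by (simp add: algebra_simps power2_eq_square)
  moreover have "\<bar>phi t - phi 0\<bar> \<le> 2 * e * t^2 * (norm u + norm v) * norm u"
    using z(3) b t by (simp add: abs_mult power2_eq_square)
  ultimately show ?thesis by simp
qed

lemma hess_sym:
  assumes tw: "twice_diff_with f Df Hf"
  shows "(Hf x *v v) \<bullet> u = (Hf x *v u) \<bullet> v"
proof -
  define S where "S = norm u + norm v + 1"
  have S: "S > 0" "norm u + norm v \<le> S" unfolding S_def by (auto intro: add_nonneg_pos)
  have key: "\<bar>(Hf x *v v) \<bullet> u - (Hf x *v u) \<bullet> v\<bar> \<le> 0 + e" if e: "e > 0" for e
  proof -
    define ep where "ep = e / (2 * S^2)"
    have ep: "ep > 0" unfolding ep_def using e S by simp
    have "(Df has_derivative (\<lambda>h. Hf x *v h)) (at x)" using tw unfolding twice_diff_with_def by blast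
    then obtain d where d: "d > 0" and R: "\<forall>y. norm (y - x) < d \<longrightarrow> norm (Df y - Df x - Hf x *v (y - x)) \<le> ep * norm (y - x)"
      unfolding has_derivative_at_alt using ep by blast
    define t where "t = d / (2 * S)"
    have t: "t > 0" unfolding t_def using d S by simp
    have "t * (norm u + norm v) \<le> t * S" using S t by (simp add: mult_left_mono)
    also have "t * S = d / 2" unfolding t_def using S by simp
    finally have td: "t * (norm u + norm v) < d" using d by simp
    have td': "t * (norm v + norm u) < d" using td by (simp add: add.commute)
    have 1: "\<bar>f (x + t *\<^sub>R u + t *\<^sub>R v) - f (x + t *\<^sub>R u) - f (x + t *\<^sub>R v) + f x - t^2 * ((Hf x *v v) \<bullet> u)\<bar>
           \<le> 2 * ep * t^2 * (norm u + norm v) * norm u"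
      by (rule mvt_part[OF tw t _ R td]) (use ep in simp)
    have 2: "\<bar>f (x + t *\<^sub>R v + t *\<^sub>R u) - f (x + t *\<^sub>R v) - f (x + t *\<^sub>R u) + f x - t^2 * ((Hf x *v u) \<bullet> v)\<bar>
           \<le> 2 * ep * t^2 * (norm v + norm u) * norm v"
      by (rule mvt_part[OF tw t _ R td']) (use ep in simp)
    have "x + t *\<^sub>R v + t *\<^sub>R u = x + t *\<^sub>R u + t *\<^sub>R v" by (simp add: algebra_simps)
    with 1 2 have "\<bar>t^2 * ((Hf x *v v) \<bullet> u) - t^2 * ((Hf x *v u) \<bullet> v)\<bar>
       \<le> 2 * ep * t^2 * (norm u + norm v) * norm u + 2 * ep * t^2 * (norm v + norm u) * norm v"
      by (simp add: abs_le_iff)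
    also have "\<dots> = 2 * ep * t^2 * ((norm u + norm v) * (norm u + norm v))" by (simp add: algebra_simps)
    also have "\<dots> \<le> 2 * ep * t^2 * (S * S)"
      using S ep by (intro mult_left_mono mult_mono) auto
    also have "\<dots> = t^2 * e" unfolding ep_def using S by (simp add: power2_eq_square)
    finally have "t^2 * \<bar>(Hf x *v v) \<bullet> u - (Hf x *v u) \<bullet> v\<bar> \<le> t^2 * e"
      by (simp add: abs_mult right_diff_distrib[symmetric])
    then show ?thesis using t by simp
  qed
  have "\<bar>(Hf x *v v) \<bullet> u - (Hf x *v u) \<bullet> v\<bar> \<le> 0" by (rule field_le_epsilon) (rule key)
  then show ?thesis by simp
qed



lemma T1:
  fixes h w :: "real^'n"
  assumes "h \<noteq> 0"
  shows "((\<lambda>s. norm (h + s *\<^sub>R w) ^ 3) has_real_derivative (3 * norm h * (h \<bullet> w))) (at 0)"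
proof -
  have "((\<lambda>s. h + s *\<^sub>R w) has_derivative (\<lambda>s. s *\<^sub>R w)) (at 0)"
    by (auto intro!: derivative_eq_intros)
  from has_derivative_compose[OF this has_derivative_norm[of "h + 0 *\<^sub>R w"]] assms
  have N: "((\<lambda>s. norm (h + s *\<^sub>R w)) has_real_derivative (w \<bullet> sgn h)) (at 0)"
    unfolding has_field_derivative_def
    apply (simp add: o_def)
    apply (erule has_derivative_eq_rhs)
    by (auto simp: fun_eq_iff)
  show ?thesis
    by (rule DERIV_cong[OF DERIV_power[OF N, of 3]])
       (use assms in \<open>simp add: sgn_div_norm inner_commute field_simps power2_eq_square\<close>)
qed

lemma quad_expand:
  fixes H :: "real^'n^'n" and a b :: "real^'n"
  shows "(H *v (a + s *\<^sub>R b)) \<bullet> (a + s *\<^sub>R b) = (H *v a) \<bullet> a + s * ((H *v a) \<bullet> b + (H *v b) \<bullet> a) + s^2 * ((H *v b) \<bullet> b)"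
  by (simp add: matrix_vector_right_distrib matrix_vector_mult_scaleR inner_add_left inner_add_right
      algebra_simps power2_eq_square)

lemma norm_expand:
  fixes a b :: "real^'n"
  shows "norm (a + s *\<^sub>R b) ^ 2 = norm a ^ 2 + s * (2 * (a \<bullet> b)) + s^2 * norm b ^ 2"
  unfolding power2_norm_eq_inner by (simp add: inner_add_left inner_add_right inner_commute algebra_simps power2_eq_square)

lemma cubic_opt:
  fixes H :: "real^'n^'n" and g h w :: "real^'n"
  assumes symH: "\<And>u v. (H *v u) \<bullet> v = (H *v v) \<bullet> u" and M: "M > 0"
    and min: "\<And>d. g \<bullet> h + 1/2 * ((H *v h) \<bullet> h) + M/6 * norm h ^ 3 \<le> g \<bullet> d + 1/2 * ((H *v d) \<bullet> d) + M/6 * norm d ^ 3"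
  shows "(H *v w) \<bullet> w + M/2 * norm h * norm w ^ 2 \<ge> 0"
proof (cases "h = 0")
  case True
  let ?q = "(H *v w) \<bullet> w"
  have b: "- (M/3) * s * norm w ^ 3 \<le> ?q" if s: "s > 0" for s
  proof -
    have 1: "0 \<le> s * (g \<bullet> w) + 1/2 * s^2 * ?q + M/6 * s^3 * norm w ^ 3"
      using min[of "s *\<^sub>R w"] True s by (simp add: matrix_vector_mult_scaleR power2_eq_square power_mult_distrib)
    have 2: "0 \<le> - s * (g \<bullet> w) + 1/2 * s^2 * ?q + M/6 * s^3 * norm w ^ 3"
      using min[of "(-s) *\<^sub>R w"] True s by (simp add: vec.neg matrix_vector_mult_scaleR power2_eq_square power_mult_distrib)
    have "0 \<le> s^2 * (?q + M/3 * s * norm w ^ 3)" using 1 2 by (simp add: algebra_simps power2_eq_square power3_eq_cube)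
    then have "0 \<le> ?q + M/3 * s * norm w ^ 3" using s by (simp add: zero_le_mult_iff)
    then show ?thesis by simp
  qed
  have "((\<lambda>s. - (M/3) * s * norm w ^ 3) \<longlongrightarrow> - (M/3) * 0 * norm w ^ 3) (at_right 0)"
    by (intro tendsto_intros)
  moreover have ev: "\<forall>\<^sub>F s in at_right 0. - (M/3) * s * norm w ^ 3 \<le> ?q"
    by (rule eventually_mono[OF eventually_at_right_less]) (rule b)
  ultimately have "- (M/3) * 0 * norm w ^ 3 \<le> ?q"
    by (rule tendsto_upperbound) simp
  then show ?thesis using True by simp
next
  case False
  define r where "r = norm h"
  have r: "r > 0" using False unfolding r_def by simp
  define P where "P d = g \<bullet> d + 1/2 * ((H *v d) \<bullet> d) + M/6 * norm d ^ 3" for d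
  have Pmin: "P h \<le> P d" for d unfolding P_def by (rule min)
  have FO: "g \<bullet> v + (H *v h) \<bullet> v + M/2 * r * (h \<bullet> v) = 0" for v
  proof -
    define N3 where "N3 = (\<lambda>s. norm (h + s *\<^sub>R v) ^ 3)"
    have eqP: "(\<lambda>s. P (h + s *\<^sub>R v)) = (\<lambda>s. g \<bullet> h + s * (g \<bullet> v) + 1/2 * ((H *v h) \<bullet> h + s * ((H *v h) \<bullet> v + (H *v v) \<bullet> h) + s^2 * ((H *v v) \<bullet> v)) + M/6 * N3 s)"
      unfolding P_def quad_expand N3_def by (simp add: inner_add_right)
    have dN3: "(N3 has_real_derivative (3 * norm h * (h \<bullet> v))) (at 0)"
      unfolding N3_def by (rule T1[OF False])
    have D: "((\<lambda>s. P (h + s *\<^sub>R v)) has_real_derivative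
        (g \<bullet> v + 1/2 * ((H *v h) \<bullet> v + (H *v v) \<bullet> h) + M/6 * (3 * norm h * (h \<bullet> v)))) (at 0)"
      unfolding eqP
      by (auto intro!: derivative_eq_intros dN3)
    have "g \<bullet> v + 1/2 * ((H *v h) \<bullet> v + (H *v v) \<bullet> h) + M/6 * (3 * norm h * (h \<bullet> v)) = 0"
      by (rule DERIV_local_min[OF D, of 1]) (auto intro: Pmin)
    then show ?thesis using symH[of v h] unfolding r_def by (simp add: algebra_simps)
  qed
  have Q: "(H *v d) \<bullet> d + M/2 * r * norm d ^ 2 \<ge> 0" if nd: "norm (h + d) = r" for d
  proof -
    have 1: "P h \<le> P (h + d)" unfolding P_def by (rule min)
    have 2: "P (h + d) - P h = g \<bullet> d + (H *v h) \<bullet> d + 1/2 * ((H *v d) \<bullet> d)"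
      using quad_expand[of H h 1 d] symH[of d h] nd unfolding P_def r_def
      by (simp add: inner_add_right algebra_simps)
    have 3: "h \<bullet> d = - (norm d ^ 2) / 2"
      using norm_expand[of h 1 d] nd unfolding r_def by simp
    from 1 2 FO[of d] 3 show ?thesis by (simp add: algebra_simps)
  qed
  have nz: "(H *v v) \<bullet> v + M/2 * r * norm v ^ 2 \<ge> 0" if hv: "h \<bullet> v \<noteq> 0" for v
  proof -
    have v0: "v \<noteq> 0" using hv by auto
    then have vv: "v \<bullet> v > 0" by simp
    define c where "c = - 2 * (h \<bullet> v) / (v \<bullet> v)"
    have c0: "c \<noteq> 0" unfolding c_def using hv vv by simp
    have cz: "c * (2 * (h \<bullet> v)) + c^2 * norm v ^ 2 = 0"
      unfolding c_def power2_norm_eq_inner using vv by (simp add: field_simps power2_eq_square)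
    have "norm (h + c *\<^sub>R v) ^ 2 = r ^ 2"
      using norm_expand[of h c v] cz unfolding r_def by simp
    then have nr: "norm (h + c *\<^sub>R v) = r" using r by (simp add: power2_eq_iff_nonneg)
    have ex: "(H *v (c *\<^sub>R v)) \<bullet> (c *\<^sub>R v) + M/2 * r * norm (c *\<^sub>R v) ^ 2 = c^2 * ((H *v v) \<bullet> v + M/2 * r * norm v ^ 2)"
      by (simp add: matrix_vector_mult_scaleR power_mult_distrib algebra_simps power2_eq_square)
    from Q[OF nr] have "c^2 * ((H *v v) \<bullet> v + M/2 * r * norm v ^ 2) \<ge> 0"
      by (simp only: ex)
    then show ?thesis using c0 by (simp add: zero_le_mult_iff)
  qed
  show ?thesis
  proof (cases "h \<bullet> w = 0")
    case False
    then show ?thesis using nz unfolding r_def by blast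
  next
    case True
    define F where "F e = (H *v (w + e *\<^sub>R h)) \<bullet> (w + e *\<^sub>R h) + M/2 * r * norm (w + e *\<^sub>R h) ^ 2" for e
    have Fe: "F = (\<lambda>e. (H *v w) \<bullet> w + e * ((H *v w) \<bullet> h + (H *v h) \<bullet> w) + e^2 * ((H *v h) \<bullet> h) + M/2 * r * (norm w ^ 2 + e * (2 * (w \<bullet> h)) + e^2 * norm h ^ 2))"
      unfolding F_def quad_expand norm_expand by simp
    have lim: "(F \<longlongrightarrow> F 0) (at_right 0)"
      unfolding Fe by (intro tendsto_intros)
    have pos: "\<forall>\<^sub>F e in at_right 0. 0 \<le> F e"
    proof (rule eventually_mono[OF eventually_at_right_less])
      fix e :: real assume e: "0 < e"
      have "h \<bullet> (w + e *\<^sub>R h) = e * (h \<bullet> h)" using True by (simp add: inner_add_right)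
      also have "\<dots> \<noteq> 0" using e False by simp
      finally show "0 \<le> F e" unfolding F_def by (rule nz)
    qed
    have "0 \<le> F 0" by (rule tendsto_lowerbound[OF lim pos]) simp
    then show ?thesis unfolding F_def r_def by simp
  qed
qed



lemma cube_sum: fixes p q :: real assumes "p \<ge> 0" "q \<ge> 0" shows "(p + q)^3 \<le> 4 * (p^3 + q^3)"
proof -
  have "0 \<le> (p + q) * (p - q)^2" using assms by simp
  then show ?thesis by (simp add: power2_eq_square power3_eq_cube algebra_simps)
qed

lemma final_arith:
  fixes y a b M :: real
  assumes a: "a \<ge> 0" and b: "b \<ge> 0" and M: "M > 0" and y: "y \<le> 3/2 * M * a + b"
  shows "y ^ 3 / M ^ 2 \<le> 14 * M * a ^ 3 + 4 / M ^ 2 * b ^ 3"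
proof -
  have "y ^ 3 \<le> (3/2 * M * a + b) ^ 3" by (rule power_mono_odd) (use y in auto)
  also have "\<dots> \<le> 4 * ((3/2 * M * a)^3 + b^3)" by (rule cube_sum) (use a b M in auto)
  also have "\<dots> = 27/2 * M^3 * a^3 + 4 * b^3" by (simp add: power3_eq_cube field_simps)
  also have "\<dots> \<le> 14 * M^3 * a^3 + 4 * b^3" using a M by (intro add_right_mono mult_right_mono) auto
  finally have "y ^ 3 / M ^ 2 \<le> (14 * M^3 * a^3 + 4 * b^3) / M^2" using M by (simp add: divide_right_mono)
  also have "\<dots> = 14 * M * a ^ 3 + 4 / M ^ 2 * b ^ 3" using M by (simp add: field_simps power2_eq_square power3_eq_cube)
  finally show ?thesis .
qed

lemma sym_eig:
  fixes A :: "real^'n^'n"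
  assumes sym: "\<And>u v. (A *v u) \<bullet> v = (A *v v) \<bullet> u"
  shows "lambda_min A \<in> eigenvalues A"
proof -
  let ?E = "eigenvalues A"
  define ev where "ev l = (SOME v. v \<noteq> 0 \<and> A *v v = l *\<^sub>R v)" for l
  have evp: "ev l \<noteq> 0 \<and> A *v ev l = l *\<^sub>R ev l" if "l \<in> ?E" for l
  proof -
    from that obtain w where "w \<noteq> 0 \<and> A *v w = l *\<^sub>R w" unfolding eigenvalues_def by blast
    then show ?thesis unfolding ev_def by (rule someI)
  qed
  have orth: "ev l1 \<bullet> ev l2 = 0" if "l1 \<in> ?E" "l2 \<in> ?E" "l1 \<noteq> l2" for l1 l2
  proof -
    have "l1 * (ev l1 \<bullet> ev l2) = (A *v ev l1) \<bullet> ev l2" using evp[OF that(1)] by simp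
    also have "\<dots> = (A *v ev l2) \<bullet> ev l1" by (rule sym)
    also have "\<dots> = l2 * (ev l1 \<bullet> ev l2)" using evp[OF that(2)] by (simp add: inner_commute)
    finally have "(l1 - l2) * (ev l1 \<bullet> ev l2) = 0" by (simp add: algebra_simps)
    then show ?thesis using that(3) by simp
  qed
  have inj: "inj_on ev ?E"
  proof (rule inj_onI)
    fix l1 l2 assume l: "l1 \<in> ?E" "l2 \<in> ?E" "ev l1 = ev l2"
    then have "l1 *\<^sub>R ev l1 = l2 *\<^sub>R ev l1" using evp[OF l(1)] evp[OF l(2)] by metis
    then show "l1 = l2" using evp[OF l(1)] by (simp add: scaleR_cancel_right)
  qed
  have "pairwise orthogonal (ev ` ?E)"
    unfolding pairwise_def orthogonal_def using orth by auto
  moreover have "0 \<notin> ev ` ?E" using evp by force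
  ultimately have "finite (ev ` ?E)" by (intro finiteI_independent pairwise_orthogonal_independent)
  then have fin: "finite ?E" using inj by (rule finite_imageD)
  let ?S = "sphere (0::real^'n) 1"
  have "(axis (undefined::'n) (1::real)) \<in> ?S" by (simp add: norm_axis_1)
  then have "?S \<noteq> {}" by blast
  moreover have "continuous_on ?S (\<lambda>w. (A *v w) \<bullet> w)"
    by (intro continuous_intros linear_continuous_on matrix_vector_mul_bounded_linear)
  ultimately obtain v where v: "v \<in> ?S" and vmin: "\<And>w. w \<in> ?S \<Longrightarrow> (A *v v) \<bullet> v \<le> (A *v w) \<bullet> w"
    using continuous_attains_inf[OF compact_sphere] by blast
  define l0 where "l0 = (A *v v) \<bullet> v"
  have nv: "norm v = 1" using v by simp
  have Qpos: "(A *v w) \<bullet> w - l0 * (w \<bullet> w) \<ge> 0" for w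
  proof (cases "w = 0")
    case False
    let ?u = "(1 / norm w) *\<^sub>R w"
    have "?u \<in> ?S" using False by simp
    then have "l0 \<le> (A *v ?u) \<bullet> ?u" unfolding l0_def by (rule vmin)
    also have "\<dots> = ((A *v w) \<bullet> w) / (w \<bullet> w)"
      by (simp add: matrix_vector_mult_scaleR power2_norm_eq_inner[symmetric] power2_eq_square)
    finally show ?thesis using False by (simp add: field_simps)
  qed simp
  define b where "b = A *v v - l0 *\<^sub>R v"
  define K where "K = (A *v b) \<bullet> b - l0 * (b \<bullet> b)"
  have vv: "v \<bullet> v = 1" using nv by (simp add: power2_norm_eq_inner[symmetric])
  have bb: "b \<bullet> b = (A *v v) \<bullet> b - l0 * (v \<bullet> b)" unfolding b_def by (simp add: inner_diff_left)
  have quad: "0 \<le> 2 * t * (b \<bullet> b) + t^2 * K" for t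
  proof -
    have "0 \<le> (A *v (v + t *\<^sub>R b)) \<bullet> (v + t *\<^sub>R b) - l0 * ((v + t *\<^sub>R b) \<bullet> (v + t *\<^sub>R b))" by (rule Qpos)
    also have "\<dots> = ((A *v v) \<bullet> v - l0 * (v \<bullet> v)) + t * ((A *v v) \<bullet> b + (A *v b) \<bullet> v - 2 * l0 * (v \<bullet> b)) + t^2 * K"
      unfolding K_def
      by (simp add: matrix_vector_right_distrib matrix_vector_mult_scaleR inner_add_left inner_add_right
          inner_commute algebra_simps power2_eq_square)
    also have "\<dots> = 2 * t * (b \<bullet> b) + t^2 * K"
    proof -
      have co: "(A *v v) \<bullet> b + (A *v b) \<bullet> v - 2 * l0 * (v \<bullet> b) = 2 * (b \<bullet> b)"
        using sym[of b v] bb by simp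
      have c0: "(A *v v) \<bullet> v - l0 * (v \<bullet> v) = 0" using vv unfolding l0_def by simp
      show ?thesis unfolding co c0 by simp
    qed
    finally show ?thesis .
  qed
  define a where "a = b \<bullet> b"
  define k where "k = \<bar>K\<bar> + 1"
  have k: "k > 0" "K \<le> k" unfolding k_def by auto
  have "0 \<le> 2 * (- a / k) * a + (- a / k)^2 * K" using quad[of "- a / k"] unfolding a_def .
  then have "0 \<le> k^2 * (2 * (- a / k) * a + (- a / k)^2 * K)" using k by simp
  also have "\<dots> = - 2 * a^2 * k + a^2 * K" using k by (simp add: field_simps power2_eq_square)
  also have "\<dots> \<le> - 2 * a^2 * k + a^2 * k" using k mult_left_mono[OF k(2), of "a^2"] by (simp add: mult.commute)
  finally have "a^2 * k \<le> 0" by (simp add: mult.commute)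
  then have "a = 0" using k by (simp add: mult_le_0_iff)
  then have "b = 0" unfolding a_def by simp
  then have "A *v v = l0 *\<^sub>R v" unfolding b_def by simp
  moreover have "v \<noteq> 0" using nv by auto
  ultimately have "l0 \<in> ?E" unfolding eigenvalues_def by blast
  then have "?E \<noteq> {}" by blast
  then show ?thesis unfolding lambda_min_def using fin by (rule Min_in[rotated])
qed


theorem mainTheorem3:
  fixes f :: "real^'n \<Rightarrow> real" and Df :: "real^'n \<Rightarrow> real^'n"
    and Hf :: "real^'n \<Rightarrow> real^'n^'n"
    and x g xp :: "real^'n" and H :: "real^'n^'n" and L M :: real
  assumes "twice_diff_with f Df Hf"
    and "hessian_lipschitz Hf L"
    and "transpose H = H"
    and "M > 0" and "M \<ge> L"
    and "\<forall>y. Omega M g H xp x \<le> Omega M g H y x"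
  shows "(- lambda_min (Hf xp)) ^ 3 / M ^ 2
           \<le> 14 * M * norm (xp - x) ^ 3 + 4 / M ^ 2 * spec_norm (Hf x - H) ^ 3"
proof -
  let ?A = "Hf xp"
  define r where "r = norm (xp - x)"
  define dl where "dl = spec_norm (Hf x - H)"
  have r0: "r \<ge> 0" unfolding r_def by simp
  have symA: "(?A *v u) \<bullet> v = (?A *v v) \<bullet> u" for u v
    by (rule hess_sym[OF assms(1)])
  have symH: "(H *v u) \<bullet> v = (H *v v) \<bullet> u" for u v
  proof -
    have "(H *v u) \<bullet> v = (u v* transpose H) \<bullet> v" by (simp only: vector_transpose_matrix)
    also have "\<dots> = u \<bullet> (transpose H *v v)" by (rule dot_lmul_matrix)
    also have "\<dots> = (H *v v) \<bullet> u" using assms(3) by (simp add: inner_commute)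
    finally show ?thesis .
  qed
  have min: "g \<bullet> (xp - x) + 1/2 * ((H *v (xp - x)) \<bullet> (xp - x)) + M/6 * norm (xp - x) ^ 3
      \<le> g \<bullet> d + 1/2 * ((H *v d) \<bullet> d) + M/6 * norm d ^ 3" for d
    using assms(6)[rule_format, of "x + d"] unfolding Omega_def by simp
  have opt: "(H *v w) \<bullet> w + M/2 * r * norm w ^ 2 \<ge> 0" for w
    using cubic_opt[OF symH assms(4) min] unfolding r_def .
  have "lambda_min ?A \<in> eigenvalues ?A" by (rule sym_eig[OF symA])
  then obtain v where v: "v \<noteq> 0" "?A *v v = lambda_min ?A *\<^sub>R v" unfolding eigenvalues_def by blast
  have sn: "\<bar>(C *v w) \<bullet> w\<bar> \<le> spec_norm C * norm w ^ 2" for C :: "real^'n^'n" and w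
  proof -
    have "\<bar>(C *v w) \<bullet> w\<bar> \<le> norm (C *v w) * norm w" by (rule Cauchy_Schwarz_ineq2)
    also have "\<dots> \<le> (spec_norm C * norm w) * norm w" unfolding spec_norm_def
      by (intro mult_right_mono onorm[OF matrix_vector_mul_bounded_linear]) simp
    finally show ?thesis by (simp add: power2_eq_square mult.assoc)
  qed
  have Lip: "spec_norm (?A - Hf x) \<le> M * r"
  proof -
    have "spec_norm (?A - Hf x) \<le> L * r" using assms(2) unfolding hessian_lipschitz_def r_def by blast
    also have "\<dots> \<le> M * r" using assms(5) r0 by (simp add: mult_right_mono)
    finally show ?thesis .
  qed
  have dpos: "dl \<ge> 0" unfolding dl_def spec_norm_def by (rule onorm_pos_le[OF matrix_vector_mul_bounded_linear])
  have dec: "(?A *v v) \<bullet> v = (H *v v) \<bullet> v + ((Hf x - H) *v v) \<bullet> v + ((?A - Hf x) *v v) \<bullet> v"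
    by (simp add: matrix_vector_mult_diff_rdistrib inner_diff_left)
  have e1: "((Hf x - H) *v v) \<bullet> v \<ge> - (dl * norm v ^ 2)" using sn[of "Hf x - H" v] unfolding dl_def by simp
  have e2: "((?A - Hf x) *v v) \<bullet> v \<ge> - (M * r * norm v ^ 2)"
  proof -
    have "\<bar>((?A - Hf x) *v v) \<bullet> v\<bar> \<le> M * r * norm v ^ 2"
      using sn[of "?A - Hf x" v] Lip by (meson mult_right_mono order_trans zero_le_power2)
    then show ?thesis by simp
  qed
  have "lambda_min ?A * norm v ^ 2 = (?A *v v) \<bullet> v" using v(2) by (simp add: power2_norm_eq_inner)
  also have "\<dots> \<ge> - (M/2 * r * norm v ^ 2) - dl * norm v ^ 2 - M * r * norm v ^ 2"
    using dec e1 e2 opt[of v] by linarith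
  finally have "lambda_min ?A * norm v ^ 2 \<ge> - (3/2 * M * r + dl) * norm v ^ 2" by (simp add: algebra_simps)
  then have "lambda_min ?A \<ge> - (3/2 * M * r + dl)" using v(1) by simp
  then have "- lambda_min ?A \<le> 3/2 * M * r + dl" by simp
  from final_arith[OF r0 dpos assms(4) this] show ?thesis unfolding r_def dl_def .
qed

end
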